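(* Let $\Omega=\mathbb{R}^{\mathbb{N}}$ with canonical process $(X_t)_{t\in\mathbb{N}}$, natural filtration $\mathcal{F}_t=\sigma(X_1,\dots,X_t)$ ($\mathcal{F}_0$ trivial), $\mathcal{F}=\sigma(\bigcup_t\mathcal{F}_t)$. Let $\mathcal{P}^\dagger$ be the set of all probability measures $\mathbb{P}$ on $\mathcal{F}$ such that for every $t\in\mathbb{N}$ the conditional mean $\mu_t=\mathbb{E}_{\mathbb{P}}[X_t\mid\mathcal{F}_{t-1}]$ exists and is finite, $\sum_{i=1}^t\mu_i\le0$ $\mathbb{P}$-a.s., and $\mathbb{E}_{\mathbb{P}}[e^{\lambda(X_t-\mu_t)}\mid\mathcal{F}_{t-1}]\le e^{\lambda^2/2}$ $\mathbb{P}$-a.s. for all $\lambda\in\mathbb{R}$. Let $A^{>0}=\big\{\limsup_{t\to\infty}\frac1t\sum_{s=1}^tX_s>0\big\}$. Then $\mu^*(A^{>0})=0$ (with $\mu^*$ computed with respect to $\mathcal{P}^\dagger$); in particular this also holds for the smaller family $\mathcal{P}^{\le0}\subseteq\mathcal{P}^\dagger$ in which each $\mu_t\le0$.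
   Context: Stopping times are with respect to the filtration above (values in $\mathbb{N}_0\cup\{\infty\}$) and $\mathcal{T}$ is the set of all stopping times. Inverse-capital measure with respect to a family $\mathcal{Q}$: $\mu^*(B) = \inf_{\tau\in\mathcal{T}:\, B\subseteq\{\tau<\infty\}} \sup_{\mathbb{P}\in\mathcal{Q}} \mathbb{P}(\tau<\infty)$ for $B\subseteq\Omega$. *)

theory Defs
  imports "HOL-Probability.Probability"
begin

text \<open>Sample space: \<Omega> = real sequences, coded as nat => real.
  The coordinate process is 1-based: X_t(w) = w (t - 1) for t >= 1.\<close>

definition Xc :: "nat \<Rightarrow> (nat \<Rightarrow> real) \<Rightarrow> real" where
  "Xc t \<omega> = \<omega> (t - 1)"

definition filt :: "nat \<Rightarrow> (nat \<Rightarrow> real) measure" where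
  "filt t = sigma UNIV {{\<omega>. Xc s \<omega> \<in> B} | s B. 1 \<le> s \<and> s \<le> t \<and> B \<in> sets borel}"

definition Fall :: "(nat \<Rightarrow> real) measure" where
  "Fall = sigma UNIV (\<Union>t. sets (filt t))"

definition stopping_time_filt :: "((nat \<Rightarrow> real) \<Rightarrow> enat) \<Rightarrow> bool" where
  "stopping_time_filt \<tau> \<longleftrightarrow> (\<forall>n::nat. {\<omega>. \<tau> \<omega> \<le> enat n} \<in> sets (filt n))"

text \<open>Generalized conditional expectation E_P[X_t | F_{t-1}], defined as
  E[X_t^+ | F_{t-1}] - E[X_t^- | F_{t-1}] (meaningful where both are finite).\<close>
definition cmean :: "(nat \<Rightarrow> real) measure \<Rightarrow> nat \<Rightarrow> (nat \<Rightarrow> real) \<Rightarrow> real" where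
  "cmean P t \<omega> =
     enn2real (nn_cond_exp P (filt (t - 1)) (\<lambda>w. ennreal (Xc t w)) \<omega>)
   - enn2real (nn_cond_exp P (filt (t - 1)) (\<lambda>w. ennreal (- Xc t w)) \<omega>)"

definition cmean_exists_finite :: "(nat \<Rightarrow> real) measure \<Rightarrow> nat \<Rightarrow> bool" where
  "cmean_exists_finite P t \<longleftrightarrow>
     (AE \<omega> in P. nn_cond_exp P (filt (t - 1)) (\<lambda>w. ennreal (Xc t w)) \<omega> < \<infinity>
               \<and> nn_cond_exp P (filt (t - 1)) (\<lambda>w. ennreal (- Xc t w)) \<omega> < \<infinity>)"

definition Pdag :: "(nat \<Rightarrow> real) measure set" where
  "Pdag = {P. prob_space P \<and> sets P = sets Fall \<and>
     (\<forall>t\<ge>1. cmean_exists_finite P t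
        \<and> (AE \<omega> in P. (\<Sum>i=1..t. cmean P i \<omega>) \<le> 0)
        \<and> (\<forall>l::real. AE \<omega> in P.
              nn_cond_exp P (filt (t - 1))
                 (\<lambda>w. ennreal (exp (l * (Xc t w - cmean P t w)))) \<omega>
              \<le> ennreal (exp (l\<^sup>2 / 2))))}"

definition Ple0 :: "(nat \<Rightarrow> real) measure set" where
  "Ple0 = {P \<in> Pdag. \<forall>t\<ge>1. AE \<omega> in P. cmean P t \<omega> \<le> 0}"

definition inv_cap :: "(nat \<Rightarrow> real) measure set \<Rightarrow> (nat \<Rightarrow> real) set \<Rightarrow> ennreal" where
  "inv_cap Q B = (INF \<tau> \<in> {\<tau>. stopping_time_filt \<tau> \<and> B \<subseteq> {\<omega>. \<tau> \<omega> < \<infinity>}}.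
                    SUP P \<in> Q. emeasure P {\<omega>. \<tau> \<omega> < \<infinity>})"

definition Apos :: "(nat \<Rightarrow> real) set" where
  "Apos = {\<omega>. limsup (\<lambda>t. ereal ((\<Sum>s=1..t. Xc s \<omega>) / real t)) > 0}"

end

theory Submission
  imports Defs
begin

lemma ville:
  fixes M :: "'a measure" and G :: "nat \<Rightarrow> 'a measure" and Z :: "nat \<Rightarrow> 'a \<Rightarrow> ennreal"
  assumes subalg: "\<And>n. subalgebra M (G n)"
    and mono: "\<And>m n. m \<le> n \<Longrightarrow> sets (G m) \<subseteq> sets (G n)"
    and meas: "\<And>n. Z n \<in> borel_measurable (G n)"
    and sup: "\<And>n A. A \<in> sets (G n) \<Longrightarrow> (\<integral>\<^sup>+x. Z (Suc n) x * indicator A x \<partial>M) \<le> (\<integral>\<^sup>+x. Z n x * indicator A x \<partial>M)"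
    and init: "(\<integral>\<^sup>+x. Z 0 x \<partial>M) \<le> 1"
  shows "{x\<in>space M. \<exists>n. c \<le> Z n x} \<in> sets M \<and> c * emeasure M {x\<in>space M. \<exists>n. c \<le> Z n x} \<le> 1"
proof -
  have spG: "\<And>n. space (G n) = space M" using subalg unfolding subalgebra_def by auto
  have subGG: "\<And>m n. m \<le> n \<Longrightarrow> subalgebra (G n) (G m)"
    using mono spG unfolding subalgebra_def by auto
  have measmn: "\<And>m n. m \<le> n \<Longrightarrow> Z m \<in> borel_measurable (G n)"
    using measurable_from_subalg[OF subGG meas] by blast
  have measM[measurable]: "\<And>n. Z n \<in> borel_measurable M"
    using measurable_from_subalg[OF subalg meas] by blast
  have setsM: "\<And>A n. A \<in> sets (G n) \<Longrightarrow> A \<in> sets M" using subalg unfolding subalgebra_def by auto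
  have iter: "(\<integral>\<^sup>+x. Z m x * indicator A x \<partial>M) \<le> (\<integral>\<^sup>+x. Z n x * indicator A x \<partial>M)"
    if "n \<le> m" "A \<in> sets (G n)" for n m A
    using that(1)
  proof (induction m rule: dec_induct)
    case base then show ?case by simp
  next
    case (step m)
    have "A \<in> sets (G m)" using mono[OF step(1)] that(2) by auto
    from sup[OF this] step(3) show ?case by (rule order_trans)
  qed
  define B where "B n = {x\<in>space M. c \<le> Z n x \<and> (\<forall>m<n. Z m x < c)}" for n
  have BG: "B n \<in> sets (G n)" for n
  proof -
    have "B n = {x\<in>space (G n). c \<le> Z n x} \<inter> {x\<in>space (G n). \<forall>m\<in>{..<n}. Z m x < c}"
      unfolding B_def spG by auto
    also have "\<dots> \<in> sets (G n)"
    proof (rule sets.Int)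
      show "{x\<in>space (G n). c \<le> Z n x} \<in> sets (G n)" using meas[of n] by measurable
      show "{x\<in>space (G n). \<forall>m\<in>{..<n}. Z m x < c} \<in> sets (G n)"
      proof (rule sets.sets_Collect_finite_All)
        fix m assume "m \<in> {..<n}"
        then have [measurable]: "Z m \<in> borel_measurable (G n)" using measmn by auto
        show "{x\<in>space (G n). Z m x < c} \<in> sets (G n)" by measurable
      qed simp
    qed
    finally show ?thesis .
  qed
  have BM[measurable]: "B n \<in> sets M" for n using setsM[OF BG] .
  have disj: "disjoint_family B"
    unfolding disjoint_family_on_def B_def
    by (auto, metis linorder_neqE_nat not_le)
  define U where "U N = {x\<in>space M. \<exists>n\<le>N. c \<le> Z n x}" for N
  have UB: "U N = (\<Union>n\<in>{..N}. B n)" for N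
  proof
    show "U N \<subseteq> (\<Union>n\<in>{..N}. B n)"
    proof
      fix x assume "x \<in> U N"
      then obtain n where n: "n \<le> N" "c \<le> Z n x" "x \<in> space M" unfolding U_def by auto
      define k where "k = (LEAST k. c \<le> Z k x)"
      have k1: "c \<le> Z k x" unfolding k_def by (rule LeastI[of _ n]) (rule n(2))
      have k2: "k \<le> n" unfolding k_def by (rule Least_le) (rule n(2))
      have k3: "\<forall>m<k. Z m x < c" unfolding k_def using not_less_Least by (metis not_le)
      show "x \<in> (\<Union>n\<in>{..N}. B n)" using k1 k2 k3 n unfolding B_def by (auto intro!: bexI[of _ k])
    qed
  next
    show "(\<Union>n\<in>{..N}. B n) \<subseteq> U N" unfolding U_def B_def by auto
  qed
  have UM[measurable]: "U N \<in> sets M" for N unfolding UB by auto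
  have UG: "U N \<in> sets (G N)" for N
  proof -
    have "(\<Union>n\<in>{..N}. B n) \<in> sets (G N)"
      using BG mono by (intro sets.finite_UN) auto
    then show ?thesis unfolding UB .
  qed
  have USuc: "U (Suc N) = U N \<union> B (Suc N)" for N
    unfolding UB by (auto simp: atMost_Suc)
  have UBdisj: "U N \<inter> B (Suc N) = {}" for N
    unfolding U_def B_def by (auto simp: not_le less_Suc_eq_le)
  define Y where "Y N x = (\<Sum>n\<le>N. Z n x * indicator (B n) x) + Z N x * indicator (space M - U N) x" for N x
  have Ymeas[measurable]: "Y N \<in> borel_measurable M" for N unfolding Y_def by measurable
  have Ybound: "(\<integral>\<^sup>+x. Y N x \<partial>M) \<le> 1" for N
  proof (induction N)
    case 0
    have "(\<integral>\<^sup>+x. Y 0 x \<partial>M) = (\<integral>\<^sup>+x. Z 0 x \<partial>M)"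
    proof (rule nn_integral_cong)
      fix x assume "x \<in> space M"
      have "U 0 = B 0" unfolding UB by auto
      then show "Y 0 x = Z 0 x" using \<open>x \<in> space M\<close> unfolding Y_def by (auto simp: indicator_def)
    qed
    then show ?case using init by simp
  next
    case (Suc N)
    have eq: "Y (Suc N) x = (\<Sum>n\<le>N. Z n x * indicator (B n) x) + Z (Suc N) x * indicator (space M - U N) x"
      if "x \<in> space M" for x
      using that USuc[of N] UBdisj[of N] unfolding Y_def
      by (auto simp: indicator_def)
    have "(\<integral>\<^sup>+x. Y (Suc N) x \<partial>M) = (\<integral>\<^sup>+x. (\<Sum>n\<le>N. Z n x * indicator (B n) x) \<partial>M) + (\<integral>\<^sup>+x. Z (Suc N) x * indicator (space M - U N) x \<partial>M)"
      by (subst nn_integral_cong[OF eq]) (auto intro!: nn_integral_add simp del: sum_mult_indicator)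
    also have "\<dots> \<le> (\<integral>\<^sup>+x. (\<Sum>n\<le>N. Z n x * indicator (B n) x) \<partial>M) + (\<integral>\<^sup>+x. Z N x * indicator (space M - U N) x \<partial>M)"
      by (intro add_left_mono sup) (metis UG spG sets.compl_sets)
    also have "\<dots> = (\<integral>\<^sup>+x. Y N x \<partial>M)"
      unfolding Y_def by (rule nn_integral_add[symmetric]) (auto simp del: sum_mult_indicator)
    finally show ?case using Suc by simp
  qed
  have boundN: "c * emeasure M (U N) \<le> 1" for N
  proof -
    have ind: "indicator (U N) x = (\<Sum>n\<le>N. indicator (B n) x :: ennreal)" for x
      unfolding UB by (rule indicator_UN_disjoint) (auto intro: disjoint_family_on_mono[OF _ disj])
    have "c * emeasure M (U N) = (\<integral>\<^sup>+x. c * indicator (U N) x \<partial>M)"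
      by (simp add: nn_integral_cmult_indicator)
    also have "\<dots> = (\<integral>\<^sup>+x. (\<Sum>n\<le>N. c * indicator (B n) x) \<partial>M)"
      unfolding ind by (simp add: sum_distrib_left)
    also have "\<dots> \<le> (\<integral>\<^sup>+x. Y N x \<partial>M)"
    proof (rule nn_integral_mono)
      fix x assume "x \<in> space M"
      have "(\<Sum>n\<le>N. c * indicator (B n) x) \<le> (\<Sum>n\<le>N. Z n x * indicator (B n) x)"
        by (rule sum_mono) (auto simp: B_def indicator_def)
      also have "\<dots> \<le> Y N x" unfolding Y_def by simp
      finally show "(\<Sum>n\<le>N. c * indicator (B n) x) \<le> Y N x" .
    qed
    also have "\<dots> \<le> 1" by (rule Ybound)
    finally show ?thesis .
  qed
  have Uinc: "incseq U" unfolding incseq_def U_def by (auto intro: order_trans)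
  have Uun: "{x\<in>space M. \<exists>n. c \<le> Z n x} = (\<Union>N. U N)" unfolding U_def by auto
  have "c * emeasure M (\<Union>N. U N) = c * (SUP N. emeasure M (U N))"
    by (subst SUP_emeasure_incseq[symmetric]) (auto simp: Uinc)
  also have "\<dots> = (SUP N. c * emeasure M (U N))" by (simp add: SUP_mult_left_ennreal)
  also have "\<dots> \<le> 1" by (rule SUP_least) (rule boundN)
  finally show ?thesis unfolding Uun by auto
qed


definition Ssum :: "nat \<Rightarrow> (nat \<Rightarrow> real) \<Rightarrow> real" where
  "Ssum n \<omega> = (\<Sum>s=1..n. Xc s \<omega>)"

lemma apos_hit:
  assumes "\<omega> \<in> Apos" "(\<epsilon>::real) > 0"
  shows "\<exists>k t. 2^(k+1)/\<epsilon> \<le> exp (1/(real k+1) * Ssum t \<omega> - (1/(real k+1))^2 * real t / 2)"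
proof -
  let ?X = "\<lambda>t. ereal (Ssum t \<omega> / real t)"
  have L: "0 < limsup ?X" using assms(1) unfolding Apos_def Ssum_def by auto
  obtain \<delta> where d: "0 < ereal \<delta>" "ereal \<delta> < limsup ?X" using ereal_dense2[OF L] by blast
  have dpos: "\<delta> > 0" using d(1) by simp
  have "\<not> (limsup ?X \<le> ereal \<delta>)" using d(2) by simp
  then obtain y where y: "y > ereal \<delta>" "\<not> eventually (\<lambda>t. y > ?X t) sequentially"
    unfolding Limsup_le_iff by blast
  have fr: "\<forall>N. \<exists>t\<ge>N. ereal \<delta> < ?X t"
  proof -
    have "frequently (\<lambda>t. \<not> y > ?X t) sequentially" using y(2) by (simp add: not_eventually)
    then have "frequently (\<lambda>t. ereal \<delta> < ?X t) sequentially"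
      by (rule frequently_elim1) (use y(1) in \<open>metis less_le_trans not_less\<close>)
    then show ?thesis unfolding frequently_sequentially .
  qed
  obtain k where k: "inverse (real (Suc k)) < \<delta>" using reals_Archimedean[OF dpos] by blast
  define lam where "lam = 1/(real k+1)"
  have lam: "0 < lam" "lam < \<delta>" using k by (auto simp: lam_def field_simps)
  define R where "R = (2::real)^(k+1)/\<epsilon>"
  have Rpos: "R > 0" using assms(2) by (simp add: R_def)
  obtain N :: nat where N: "2 * ln R / lam^2 \<le> real N" using real_arch_simple by blast
  obtain t where t: "t \<ge> N" "ereal \<delta> < ?X t" using fr by blast
  have dt: "\<delta> < Ssum t \<omega> / real t" using t(2) by simp
  have tpos: "real t > 0" using dt dpos by (cases "t = 0") auto
  have S: "Ssum t \<omega> \<ge> lam * real t"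
  proof -
    have "\<delta> * real t < Ssum t \<omega>" using dt tpos by (simp add: field_simps)
    moreover have "lam * real t \<le> \<delta> * real t" using lam tpos by (intro mult_right_mono) auto
    ultimately show ?thesis by linarith
  qed
  have l2: "lam^2 > 0" using lam by simp
  have "2 * ln R \<le> real N * lam^2" using N l2 by (simp add: pos_divide_le_eq)
  also have "\<dots> \<le> real t * lam^2" using t(1) l2 by (intro mult_right_mono) auto
  finally have lnR: "ln R \<le> lam^2 * real t / 2" by (simp add: field_simps)
  have "lam * Ssum t \<omega> \<ge> lam * (lam * real t)" using S lam by (intro mult_left_mono) auto
  then have "lam^2 * real t / 2 \<le> lam * Ssum t \<omega> - lam^2 * real t / 2" by (simp add: power2_eq_square)
  with lnR have "ln R \<le> lam * Ssum t \<omega> - lam^2 * real t / 2" by linarith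
  then have "exp (ln R) \<le> exp (lam * Ssum t \<omega> - lam^2 * real t / 2)" by simp
  then have "R \<le> exp (lam * Ssum t \<omega> - lam^2 * real t / 2)" using Rpos by simp
  then show ?thesis unfolding R_def lam_def by blast
qed

lemma space_filt[simp]: "space (filt n) = UNIV"
  unfolding filt_def by (simp add: space_measure_of_conv)

lemma sets_filt: "sets (filt n) = sigma_sets UNIV {{\<omega>. Xc s \<omega> \<in> B} | s B. 1 \<le> s \<and> s \<le> n \<and> B \<in> sets borel}"
  unfolding filt_def by (rule sets_measure_of) auto

lemma filt_mono: "m \<le> n \<Longrightarrow> sets (filt m) \<subseteq> sets (filt n)"
  unfolding sets_filt by (rule sigma_sets_mono') (auto intro: order_trans)

lemma space_Fall[simp]: "space Fall = UNIV"
  unfolding Fall_def by (simp add: space_measure_of_conv)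

lemma sets_Fall: "sets Fall = sigma_sets UNIV (\<Union>t. sets (filt t))"
  unfolding Fall_def by (rule sets_measure_of) auto

lemma filt_Fall: "sets (filt n) \<subseteq> sets Fall"
  unfolding sets_Fall by (auto intro: sigma_sets.Basic)

lemma Xc_meas: "1 \<le> s \<Longrightarrow> s \<le> n \<Longrightarrow> Xc s \<in> borel_measurable (filt n)"
  by (rule measurableI) (auto simp: sets_filt intro!: sigma_sets.Basic)

lemma Ssum_meas: "Ssum n \<in> borel_measurable (filt n)"
  unfolding Ssum_def by (rule borel_measurable_sum) (auto intro: Xc_meas)

lemma subalg_filt: "subalgebra (filt m) (filt n)" if "n \<le> m"
  using filt_mono[OF that] unfolding subalgebra_def by auto

lemma subalg_P: "sets P = sets Fall \<Longrightarrow> subalgebra P (filt n)"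
  unfolding subalgebra_def using filt_Fall[of n] sets_eq_imp_space_eq[of P Fall] by auto


lemma cmean_meas: "cmean P i \<in> borel_measurable (filt (i - 1))"
  unfolding cmean_def by measurable

lemma exp_step:
  fixes g :: "nat \<Rightarrow> real"
  shows "exp (lam * (\<Sum>i=1..Suc n. g i) - lam^2 * real (Suc n) / 2)
       = exp (lam * (\<Sum>i=1..n. g i) - lam^2 * real n / 2) * exp (- (lam^2/2)) * exp (lam * g (Suc n))"
  by (simp add: exp_add[symmetric] algebra_simps add_divide_distrib)

lemma perP:
  assumes P: "P \<in> Pdag" and lam: "lam > 0" and r: "r > 0"
  shows "emeasure P {\<omega>. \<exists>n. r \<le> exp (lam * Ssum n \<omega> - lam^2 * real n / 2)} \<le> ennreal (1/r)"
proof -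
  have ps: "prob_space P" and sP: "sets P = sets Fall" using P unfolding Pdag_def by auto
  interpret prob_space P by (rule ps)
  have spP[simp]: "space P = UNIV" using sets_eq_imp_space_eq[OF sP] by simp
  have Pdag_t: "\<And>t. t \<ge> 1 \<Longrightarrow> (AE \<omega> in P. (\<Sum>i=1..t. cmean P i \<omega>) \<le> 0)
        \<and> (\<forall>l::real. AE \<omega> in P.
              nn_cond_exp P (filt (t - 1))
                 (\<lambda>w. ennreal (exp (l * (Xc t w - cmean P t w)))) \<omega>
              \<le> ennreal (exp (l\<^sup>2 / 2)))"
    using P unfolding Pdag_def by auto
  define Z where "Z n \<omega> = ennreal (exp (lam * (\<Sum>i=1..n. Xc i \<omega> - cmean P i \<omega>) - lam^2 * real n / 2))" for n \<omega>
  have sfs: "sigma_finite_subalgebra P (filt n)" for n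
    by (rule finite_measure_subalgebra_is_sigma_finite)
       (simp add: finite_measure_subalgebra_def finite_measure_subalgebra_axioms_def subalg_P[OF sP] finite_measure_axioms)
  have gmeas: "(\<lambda>\<omega>. Xc i \<omega> - cmean P i \<omega>) \<in> borel_measurable (filt n)" if "i \<in> {1..n}" for i n
  proof -
    have "Xc i \<in> borel_measurable (filt n)" using that by (auto intro: Xc_meas)
    moreover have "cmean P i \<in> borel_measurable (filt n)"
      using that by (intro measurable_from_subalg[OF subalg_filt cmean_meas[of P i]]) auto
    ultimately show ?thesis by measurable
  qed
  have Zmeas: "Z n \<in> borel_measurable (filt n)" for n
  proof -
    have "(\<lambda>\<omega>. \<Sum>i=1..n. Xc i \<omega> - cmean P i \<omega>) \<in> borel_measurable (filt n)"
      by (rule borel_measurable_sum) (rule gmeas)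
    then show ?thesis unfolding Z_def by measurable
  qed
  have sup: "(\<integral>\<^sup>+x. Z (Suc n) x * indicator A x \<partial>P) \<le> (\<integral>\<^sup>+x. Z n x * indicator A x \<partial>P)"
    if A: "A \<in> sets (filt n)" for n A
  proof -
    define a where "a = lam^2/2"
    define W where "W x = ennreal (exp (lam * (Xc (Suc n) x - cmean P (Suc n) x)))" for x
    define f where "f x = Z n x * indicator A x * ennreal (exp (- a))" for x
    have Wm: "W \<in> borel_measurable P"
    proof -
      have "(\<lambda>\<omega>. Xc (Suc n) \<omega> - cmean P (Suc n) \<omega>) \<in> borel_measurable (filt (Suc n))"
        by (rule gmeas) auto
      then have "(\<lambda>\<omega>. Xc (Suc n) \<omega> - cmean P (Suc n) \<omega>) \<in> borel_measurable P"
        by (rule measurable_from_subalg[OF subalg_P[OF sP]])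
      then show ?thesis unfolding W_def by measurable
    qed
    have fm: "f \<in> borel_measurable (filt n)"
    proof -
      have "indicator A \<in> borel_measurable (filt n)" using A by simp
      then show ?thesis unfolding f_def using Zmeas[of n] by measurable
    qed
    have eq1: "Z (Suc n) x * indicator A x = f x * W x" for x
      unfolding Z_def f_def W_def a_def
      by (subst exp_step) (simp add: ennreal_mult' mult_ac)
    have AEc: "AE x in P. nn_cond_exp P (filt n) W x \<le> ennreal (exp a)"
      using Pdag_t[of "Suc n"] unfolding W_def a_def by auto
    have "(\<integral>\<^sup>+x. Z (Suc n) x * indicator A x \<partial>P) = (\<integral>\<^sup>+x. f x * W x \<partial>P)"
      by (simp add: eq1)
    also have "\<dots> = (\<integral>\<^sup>+x. f x * nn_cond_exp P (filt n) W x \<partial>P)"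
      by (rule sigma_finite_subalgebra.nn_cond_exp_intg[OF sfs fm Wm, symmetric])
    also have "\<dots> \<le> (\<integral>\<^sup>+x. f x * ennreal (exp a) \<partial>P)"
      by (rule nn_integral_mono_AE) (use AEc in \<open>auto elim!: eventually_mono intro: mult_left_mono\<close>)
    also have "\<dots> = (\<integral>\<^sup>+x. Z n x * indicator A x \<partial>P)"
    proof -
      have "ennreal (exp (- a)) * ennreal (exp a) = 1"
        by (simp add: ennreal_mult'[symmetric] exp_minus field_simps)
      then show ?thesis unfolding f_def by (simp add: mult.assoc)
    qed
    finally show ?thesis .
  qed
  have init: "(\<integral>\<^sup>+x. Z 0 x \<partial>P) \<le> 1"
    using emeasure_space_1 by (simp add: Z_def)
  note V = ville[of P filt Z "ennreal r", OF subalg_P[OF sP] filt_mono Zmeas sup init]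
  let ?B = "{x\<in>space P. \<exists>n. ennreal r \<le> Z n x}"
  have AEs: "AE \<omega> in P. \<forall>n. (\<Sum>i=1..n. cmean P i \<omega>) \<le> 0"
  proof (subst AE_all_countable, intro allI)
    fix n show "AE \<omega> in P. (\<Sum>i=1..n. cmean P i \<omega>) \<le> 0"
      using Pdag_t[of n] by (cases "n = 0") auto
  qed
  have "emeasure P {\<omega>. \<exists>n. r \<le> exp (lam * Ssum n \<omega> - lam^2 * real n / 2)} \<le> emeasure P ?B"
  proof (rule emeasure_mono_AE)
    show "?B \<in> sets P" using V by blast
    show "AE x in P. x \<in> {\<omega>. \<exists>n. r \<le> exp (lam * Ssum n \<omega> - lam^2 * real n / 2)} \<longrightarrow> x \<in> ?B"
      using AEs
    proof (rule eventually_mono, intro impI)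
      fix x assume s: "\<forall>n. (\<Sum>i=1..n. cmean P i x) \<le> 0"
        and "x \<in> {\<omega>. \<exists>n. r \<le> exp (lam * Ssum n \<omega> - lam^2 * real n / 2)}"
      then obtain n where h: "r \<le> exp (lam * Ssum n x - lam^2 * real n / 2)" by auto
      have "lam * Ssum n x \<le> lam * (\<Sum>i=1..n. Xc i x - cmean P i x)"
        using s[rule_format, of n] lam unfolding Ssum_def sum_subtractf by (intro mult_left_mono) auto
      then have "r \<le> exp (lam * (\<Sum>i=1..n. Xc i x - cmean P i x) - lam^2 * real n / 2)"
        using h by (meson diff_right_mono exp_le_cancel_iff order_trans)
      then have "ennreal r \<le> Z n x" unfolding Z_def by (simp add: ennreal_leI)
      then show "x \<in> ?B" by auto
    qed
  qed
  also have "\<dots> \<le> ennreal (1/r)"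
  proof -
    have "ennreal r * emeasure P ?B \<le> 1" using V by blast
    then have "ennreal (1/r) * (ennreal r * emeasure P ?B) \<le> ennreal (1/r)"
      using mult_left_mono[of _ 1 "ennreal (1/r)"] by fastforce
    moreover have "ennreal (1/r) * ennreal r = 1" using r by (simp add: ennreal_mult'[symmetric])
    ultimately show ?thesis by (simp add: mult.assoc[symmetric])
  qed
  finally show ?thesis .
qed


lemma small:
  assumes eps: "(\<epsilon>::real) > 0"
  shows "\<exists>\<tau>. stopping_time_filt \<tau> \<and> Apos \<subseteq> {\<omega>. \<tau> \<omega> < \<infinity>}
          \<and> (\<forall>P\<in>Pdag. emeasure P {\<omega>. \<tau> \<omega> < \<infinity>} \<le> ennreal \<epsilon>)"
proof -
  define lamk where "lamk k = 1/(real k+1)" for k :: nat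
  define rk where "rk k = (2::real)^(k+1)/\<epsilon>" for k :: nat
  define G where "G k t \<omega> \<longleftrightarrow> rk k \<le> exp (lamk k * Ssum t \<omega> - (lamk k)^2 * real t / 2)" for k t \<omega>
  define \<tau> where "\<tau> \<omega> = (if \<exists>t k. G k t \<omega> then enat (LEAST t. \<exists>k. G k t \<omega>) else \<infinity>)" for \<omega>
  have Gm: "{\<omega>. G k t \<omega>} \<in> sets (filt t)" for k t
  proof -
    have [measurable]: "Ssum t \<in> borel_measurable (filt t)" by (rule Ssum_meas)
    have "{\<omega> \<in> space (filt t). G k t \<omega>} \<in> sets (filt t)" unfolding G_def by measurable
    then show ?thesis by simp
  qed
  have tle: "{\<omega>. \<tau> \<omega> \<le> enat n} = (\<Union>t\<in>{..n}. \<Union>k. {\<omega>. G k t \<omega>})" for n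
  proof (rule set_eqI, rule iffI)
    fix \<omega> assume "\<omega> \<in> {\<omega>. \<tau> \<omega> \<le> enat n}"
    then have tn: "\<tau> \<omega> \<le> enat n" by simp
    have ex: "\<exists>t k. G k t \<omega>"
    proof (rule ccontr)
      assume "\<not> (\<exists>t k. G k t \<omega>)"
      then have "\<tau> \<omega> = \<infinity>" unfolding \<tau>_def by simp
      with tn show False by simp
    qed
    then have "\<tau> \<omega> = enat (LEAST t. \<exists>k. G k t \<omega>)" unfolding \<tau>_def by simp
    with tn have le: "(LEAST t. \<exists>k. G k t \<omega>) \<le> n" by simp
    from ex have "\<exists>k. G k (LEAST t. \<exists>k. G k t \<omega>) \<omega>" by (rule LeastI_ex)
    then show "\<omega> \<in> (\<Union>t\<in>{..n}. \<Union>k. {\<omega>. G k t \<omega>})" using le by auto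
  next
    fix \<omega> assume "\<omega> \<in> (\<Union>t\<in>{..n}. \<Union>k. {\<omega>. G k t \<omega>})"
    then obtain t k where tk: "t \<le> n" "G k t \<omega>" by auto
    then have "(LEAST t. \<exists>k. G k t \<omega>) \<le> t" by (intro Least_le) auto
    then show "\<omega> \<in> {\<omega>. \<tau> \<omega> \<le> enat n}" using tk unfolding \<tau>_def by auto
  qed
  have stop: "stopping_time_filt \<tau>"
    unfolding stopping_time_filt_def
  proof
    fix n
    have "(\<Union>t\<in>{..n}. \<Union>k. {\<omega>. G k t \<omega>}) \<in> sets (filt n)"
    proof (rule sets.finite_UN)
      fix t assume "t \<in> {..n}"
      then have "range (\<lambda>k. {\<omega>. G k t \<omega>}) \<subseteq> sets (filt n)" using Gm filt_mono[of t n] by auto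
      then show "(\<Union>k. {\<omega>. G k t \<omega>}) \<in> sets (filt n)" by (rule sets.countable_UN)
    qed auto
    then show "{\<omega>. \<tau> \<omega> \<le> enat n} \<in> sets (filt n)" unfolding tle .
  qed
  define E where "E k = {\<omega>. \<exists>t. G k t \<omega>}" for k
  have fin1: "\<tau> \<omega> < \<infinity> \<longleftrightarrow> (\<exists>t k. G k t \<omega>)" for \<omega>
    unfolding \<tau>_def by simp
  have fin: "{\<omega>. \<tau> \<omega> < \<infinity>} = (\<Union>k. E k)" unfolding fin1 E_def by blast
  have EF: "E k \<in> sets Fall" for k
  proof -
    have "E k = (\<Union>t. {\<omega>. G k t \<omega>})" unfolding E_def by auto
    also have "\<dots> \<in> sets Fall" using Gm filt_Fall by (intro sets.countable_UN) auto
    finally show ?thesis .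
  qed
  have cover: "Apos \<subseteq> {\<omega>. \<tau> \<omega> < \<infinity>}"
  proof
    fix \<omega> assume "\<omega> \<in> Apos"
    from apos_hit[OF this eps] obtain k t where "G k t \<omega>" unfolding G_def rk_def lamk_def by blast
    then show "\<omega> \<in> {\<omega>. \<tau> \<omega> < \<infinity>}" unfolding fin E_def by auto
  qed
  have geo: "(\<lambda>k. \<epsilon> * (1/2)^Suc k) sums \<epsilon>"
    using sums_mult[OF power_half_series, of \<epsilon>] by (simp only: mult_1_right)
  have bound: "emeasure P {\<omega>. \<tau> \<omega> < \<infinity>} \<le> ennreal \<epsilon>" if P: "P \<in> Pdag" for P
  proof -
    have sP: "sets P = sets Fall" using P unfolding Pdag_def by auto
    have "emeasure P (\<Union>k. E k) \<le> (\<Sum>k. emeasure P (E k))"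
      by (rule emeasure_subadditive_countably) (use EF sP in auto)
    also have "\<dots> \<le> (\<Sum>k. ennreal (\<epsilon> * (1/2)^Suc k))"
    proof (rule suminf_le)
      fix k
      have "emeasure P (E k) \<le> ennreal (1 / rk k)"
        unfolding E_def G_def by (rule perP[OF P]) (use eps in \<open>auto simp: lamk_def rk_def\<close>)
      also have "1 / rk k = \<epsilon> * (1/2)^Suc k" by (simp add: rk_def power_one_over)
      finally show "emeasure P (E k) \<le> ennreal (\<epsilon> * (1/2)^Suc k)" .
    qed auto
    also have "\<dots> = ennreal (\<Sum>k. \<epsilon> * (1/2)^Suc k)"
    proof (rule suminf_ennreal2)
      show "summable (\<lambda>k. \<epsilon> * (1/2)^Suc k)" using geo by (rule sums_summable)
    qed (use eps in simp)
    also have "(\<Sum>k. \<epsilon> * (1/2)^Suc k) = \<epsilon>" using geo by (rule sums_unique[symmetric])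
    finally show ?thesis unfolding fin .
  qed
  show ?thesis by (intro exI[of _ \<tau>] conjI stop cover ballI bound)
qed

lemma inv_cap_zero:
  assumes "Q \<subseteq> Pdag"
  shows "inv_cap Q Apos = 0"
proof -
  have "inv_cap Q Apos \<le> 0 + ennreal e" if e: "0 < e" for e
  proof -
    obtain \<tau> where t: "stopping_time_filt \<tau>" "Apos \<subseteq> {\<omega>. \<tau> \<omega> < \<infinity>}"
      "\<forall>P\<in>Pdag. emeasure P {\<omega>. \<tau> \<omega> < \<infinity>} \<le> ennreal e" using small[OF e] by blast
    have "inv_cap Q Apos \<le> (SUP P \<in> Q. emeasure P {\<omega>. \<tau> \<omega> < \<infinity>})"
      unfolding inv_cap_def by (rule INF_lower) (use t in auto)
    also have "\<dots> \<le> ennreal e" using t(3) assms by (intro SUP_least) auto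
    finally show ?thesis by simp
  qed
  then have "inv_cap Q Apos \<le> 0" by (rule ennreal_le_epsilon) auto
  then show ?thesis by simp
qed

theorem mainTheorem13:
  shows "inv_cap Pdag Apos = 0 \<and> Ple0 \<subseteq> Pdag \<and> inv_cap Ple0 Apos = 0"
proof -
  have sub: "Ple0 \<subseteq> Pdag" unfolding Ple0_def by (rule Collect_restrict)
  show ?thesis by (intro conjI inv_cap_zero order_refl sub)
qed

end
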